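(* Let $q\ge2$ and $s\ge2$ be integers. There exist constants $l_0\in\mathbb{N}$, $c>0$ and $C>0$ (depending only on $q,s$) such that the following holds. Let $f\colon\mathbb{N}_0\to\mathbb{U}$ be $q$-multiplicative and let $(K_i)_{i\ge0}$ be integers $\ge0$ and $(\varepsilon_i)_{i\ge0}$ positive reals such that $K_0=0$, $L_i:=K_{i+1}-K_i\ge l_0$ and $$\|S^{K_i}f\|_{U^s[q^{L_i}]}\le 1-\varepsilon_i\quad\text{for all }i\ge0.$$ Then for every $M\ge0$, every integer $K\ge K_M$ and every $\mathbf r=(r_\omega)_{\omega\in\{0,1\}^s}\in\mathbb{N}_0^{2^s}$ with $0\le r_\omega\le s$ for all $\omega$, $$|A(f,\mathbf r,K)|\le C\exp\Big(-c\sum_{i=0}^{M-1}\varepsilon_i\Big).$$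
   Context: $\mathbb{N}_0=\{0,1,\dots\}$, $\mathbb{U}=\{z\in\mathbb{C}:|z|=1\}$. $f$ is $q$-multiplicative if $f(m+n)=f(m)f(n)$ whenever $t,m,n\ge0$, $m<q^t$, $q^t\mid n$. For $l\ge0$, $S^lf(n)=f(q^ln)$. For $N\ge1$, $[N]=\{0,\dots,N-1\}$ and $\Pi(N)$ is the set of $\vec n=(n_0,\dots,n_s)\in\mathbb{Z}^{s+1}$ with $n_0+\omega_1n_1+\dots+\omega_sn_s\in[N]$ for all $\omega\in\{0,1\}^s$. With $\mathcal{C}$ complex conjugation and $|\omega|=\sum\omega_i$, $$A(f,\mathbf r,L)=\frac{1}{|\Pi(q^L)|}\sum_{\vec n\in\Pi(q^L)}\prod_{\omega\in\{0,1\}^s}\mathcal{C}^{|\omega|}f(n_0+\omega_1n_1+\dots+\omega_sn_s+r_\omega),$$ and the Gowers norm is $\|f\|_{U^s[N]}\ge0$ with $\|f\|_{U^s[N]}^{2^s}=\frac{1}{|\Pi(N)|}\sum_{\vec n\in\Pi(N)}\prod_{\omega}\mathcal{C}^{|\omega|}f(n_0+\omega_1n_1+\dots+\omega_sn_s)$ (so $A(f,\mathbf 0,L)=\|f\|_{U^s[q^L]}^{2^s}$). *)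

theory Defs
  imports Complex_Main
begin

text \<open>A vector (n_0,...,n_s) in Z^(s+1) is a function nat => int vanishing above s.
  A cube vertex omega in {0,1}^s is identified with the subset of {1..s} where omega_i = 1.\<close>

definition q_multiplicative :: "nat \<Rightarrow> (nat \<Rightarrow> complex) \<Rightarrow> bool" where
  "q_multiplicative q f \<longleftrightarrow>
     (\<forall>t m n. m < q ^ t \<and> q ^ t dvd n \<longrightarrow> f (m + n) = f m * f n)"

definition shiftS :: "nat \<Rightarrow> nat \<Rightarrow> (nat \<Rightarrow> complex) \<Rightarrow> nat \<Rightarrow> complex" where
  "shiftS q l f n = f (q ^ l * n)"

definition cube_form :: "(nat \<Rightarrow> int) \<Rightarrow> nat set \<Rightarrow> int" where
  "cube_form n \<omega> = n 0 + (\<Sum>i\<in>\<omega>. n i)"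

definition Pi_set :: "nat \<Rightarrow> nat \<Rightarrow> (nat \<Rightarrow> int) set" where
  "Pi_set s N = {n. (\<forall>i>s. n i = 0) \<and>
      (\<forall>\<omega>\<in>Pow {1..s}. 0 \<le> cube_form n \<omega> \<and> cube_form n \<omega> < int N)}"

definition conj_pow :: "nat \<Rightarrow> complex \<Rightarrow> complex" where
  "conj_pow k z = (if even k then z else cnj z)"

definition A_avg :: "nat \<Rightarrow> nat \<Rightarrow> (nat \<Rightarrow> complex) \<Rightarrow> (nat set \<Rightarrow> nat) \<Rightarrow> nat \<Rightarrow> complex" where
  "A_avg q s f r L =
     (\<Sum>n\<in>Pi_set s (q ^ L).
        \<Prod>\<omega>\<in>Pow {1..s}. conj_pow (card \<omega>) (f (nat (cube_form n \<omega>) + r \<omega>)))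
     / of_nat (card (Pi_set s (q ^ L)))"

definition gowers_avg :: "nat \<Rightarrow> nat \<Rightarrow> (nat \<Rightarrow> complex) \<Rightarrow> complex" where
  "gowers_avg s N f =
     (\<Sum>n\<in>Pi_set s N.
        \<Prod>\<omega>\<in>Pow {1..s}. conj_pow (card \<omega>) (f (nat (cube_form n \<omega>))))
     / of_nat (card (Pi_set s N))"

definition gowers_norm :: "nat \<Rightarrow> nat \<Rightarrow> (nat \<Rightarrow> complex) \<Rightarrow> real" where
  "gowers_norm s N f = cmod (gowers_avg s N f) powr (1 / 2 ^ s)"

end

theory Submission
  imports Defs "HOL-Library.FuncSet"
begin


definition Rset :: "nat \<Rightarrow> (nat set \<Rightarrow> int) \<Rightarrow> nat \<Rightarrow> (nat \<Rightarrow> int) set" where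
  "Rset s e N = {n. (\<forall>i>s. n i = 0) \<and>
      (\<forall>\<omega>\<in>Pow {1..s}. 0 \<le> cube_form n \<omega> + e \<omega> \<and> cube_form n \<omega> + e \<omega> < int N)}"

definition vs :: "nat \<Rightarrow> nat set" where "vs i = (if i = 0 then {} else {i})"

lemma cube_vs: "cube_form n (vs i) = (if i = 0 then n 0 else n 0 + n i)"
  by (simp add: cube_form_def vs_def)

lemma vs_Pow: "i \<le> s \<Longrightarrow> vs i \<in> Pow {1..s}"
  by (auto simp: vs_def)

lemma bounded_funs:
  assumes "\<And>n. n \<in> S \<Longrightarrow> (\<forall>i>s. n i = 0) \<and> (\<forall>i\<le>s. 0 \<le> cube_form n (vs i) + e (vs i) \<and> cube_form n (vs i) + e (vs i) < int N)"
  shows "finite S \<and> card S \<le> N ^ (s+1)"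
proof -
  define g where "g n = restrict (\<lambda>i. cube_form n (vs i) + e (vs i)) {0..s}" for n
  have inj: "inj_on g S"
  proof (rule inj_onI)
    fix x y assume x: "x \<in> S" and y: "y \<in> S" and eq: "g x = g y"
    have h: "cube_form x (vs i) = cube_form y (vs i)" if "i \<le> s" for i
      using fun_cong[OF eq, of i] that by (simp add: g_def)
    show "x = y"
    proof
      fix i
      show "x i = y i"
      proof (cases "i \<le> s")
        case True
        have "x 0 = y 0" using h[of 0] by (simp add: cube_vs)
        then show ?thesis using h[OF True] by (simp add: cube_vs split: if_splits)
      next
        case False then show ?thesis using assms[OF x] assms[OF y] by auto
      qed
    qed
  qed
  have sub: "g ` S \<subseteq> (\<Pi>\<^sub>E i\<in>{0..s}. {0..<int N})"
    using assms by (auto simp: g_def)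
  have fin: "finite (\<Pi>\<^sub>E i\<in>{0..s}. {0..<int N})" by (simp add: finite_PiE)
  have c: "card (\<Pi>\<^sub>E i\<in>{0..s}. {0..<int N}) = N ^ (s+1)" by (simp add: card_PiE)
  have "finite S" using inj_on_finite[OF inj sub fin] .
  moreover have "card S \<le> N ^ (s+1)"
    using card_inj_on_le[OF inj sub fin] c by simp
  ultimately show ?thesis by simp
qed

lemma Rset_bounded: "finite (Rset s e N) \<and> card (Rset s e N) \<le> N ^ (s+1)"
proof (rule bounded_funs[where e=e])
  fix n assume "n \<in> Rset s e N"
  then show "(\<forall>i>s. n i = 0) \<and> (\<forall>i\<le>s. 0 \<le> cube_form n (vs i) + e (vs i) \<and> cube_form n (vs i) + e (vs i) < int N)"
    unfolding Rset_def using vs_Pow by blast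
qed

definition Fset :: "nat \<Rightarrow> nat \<Rightarrow> (nat \<Rightarrow> int) set" where
  "Fset s Q = {a. (\<forall>i>s. a i = 0) \<and> (\<forall>i\<le>s. 0 \<le> cube_form a (vs i) \<and> cube_form a (vs i) < int Q)}"

lemma Fset_finite: "finite (Fset s Q)"
  using bounded_funs[of "Fset s Q" s "\<lambda>_. 0" Q] by (auto simp: Fset_def)

definition dd :: "nat \<Rightarrow> (nat \<Rightarrow> int) \<Rightarrow> (nat set \<Rightarrow> int) \<Rightarrow> nat set \<Rightarrow> int" where
  "dd Q a d = (\<lambda>\<omega>. (cube_form a \<omega> + d \<omega>) div int Q)"

definition hmap :: "nat \<Rightarrow> (nat \<Rightarrow> int) \<times> (nat \<Rightarrow> int) \<Rightarrow> nat \<Rightarrow> int" where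
  "hmap Q p = (\<lambda>i. int Q * snd p i + fst p i)"

lemma cube_lin: "cube_form (\<lambda>i. c * n i + a i) \<omega> = c * cube_form n \<omega> + cube_form a \<omega>"
  by (simp add: cube_form_def sum.distrib sum_distrib_left algebra_simps)

lemma divmod_range:
  fixes Q x y N :: int
  assumes "Q > 0"
  shows "(0 \<le> Q*x + y \<and> Q*x + y < Q*N) \<longleftrightarrow> (0 \<le> x + y div Q \<and> x + y div Q < N)"
proof -
  define z where "z = x + y div Q"
  define r where "r = y mod Q"
  have e: "Q*x + y = Q*z + r" unfolding z_def r_def
    by (metis distrib_left add.assoc div_mult_mod_eq mult.commute)
  have r: "0 \<le> r" "r < Q" unfolding r_def using assms by auto
  have A: "0 \<le> Q*z + r \<longleftrightarrow> 0 \<le> z"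
  proof
    assume h: "0 \<le> Q*z + r"
    show "0 \<le> z"
    proof (rule ccontr)
      assume "\<not> 0 \<le> z" then have "z \<le> -1" by simp
      then have "Q*z \<le> Q*(-1)" using assms by (intro mult_left_mono) auto
      then show False using h r by simp
    qed
  next
    assume "0 \<le> z" then show "0 \<le> Q*z + r" using assms r by simp
  qed
  have B: "Q*z + r < Q*N \<longleftrightarrow> z < N"
  proof
    assume h: "Q*z + r < Q*N"
    show "z < N"
    proof (rule ccontr)
      assume "\<not> z < N" then have "N \<le> z" by simp
      then have "Q*N \<le> Q*z" using assms by (intro mult_left_mono) auto
      then show False using h r by linarith
    qed
  next
    assume "z < N" then have "z \<le> N - 1" by simp
    then have "Q*z \<le> Q*(N-1)" using assms by (intro mult_left_mono) auto
    then show "Q*z + r < Q*N" using r by (simp add: algebra_simps)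
  qed
  show ?thesis using A B e z_def by simp
qed

definition aof :: "nat \<Rightarrow> nat \<Rightarrow> (nat \<Rightarrow> int) \<Rightarrow> nat \<Rightarrow> int" where
  "aof s Q n i = (if i = 0 then n 0 mod int Q else if i \<le> s then (n 0 + n i) mod int Q - n 0 mod int Q else 0)"

lemma hmap_bij:
  assumes "Q > 0"
  shows "bij_betw (hmap Q) (Sigma (Fset s Q) (\<lambda>a. Rset s (dd Q a e) N)) (Rset s e (Q*N))"
proof (rule bij_betw_byWitness[where f' = "\<lambda>n. (aof s Q n, \<lambda>i. (n i - aof s Q n i) div int Q)"])
  have Qp: "int Q > 0" using assms by simp
  show "\<forall>p\<in>Sigma (Fset s Q) (\<lambda>a. Rset s (dd Q a e) N).
      (aof s Q (hmap Q p), \<lambda>i. (hmap Q p i - aof s Q (hmap Q p) i) div int Q) = p"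
  proof
    fix p assume p: "p \<in> Sigma (Fset s Q) (\<lambda>a. Rset s (dd Q a e) N)"
    obtain a n where pa: "p = (a, n)" by force
    have a: "a \<in> Fset s Q" and n: "n \<in> Rset s (dd Q a e) N" using p pa by auto
    have a0: "0 \<le> a 0" "a 0 < int Q" using a unfolding Fset_def by (auto dest!: spec[of _ 0] simp: cube_vs)
    have ai: "0 \<le> a 0 + a i" "a 0 + a i < int Q" if "1 \<le> i" "i \<le> s" for i
      using a that unfolding Fset_def by (auto dest!: spec[of _ i] simp: cube_vs)
    have aeq: "aof s Q (hmap Q p) = a"
    proof
      fix i
      show "aof s Q (hmap Q p) i = a i"
      proof (cases "i = 0")
        case True then show ?thesis using a0 by (simp add: aof_def hmap_def pa)
      next
        case False
        show ?thesis
        proof (cases "i \<le> s")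
          case True
          have "(int Q * n 0 + a 0 + (int Q * n i + a i)) mod int Q = (a 0 + a i) mod int Q"
            by (metis (no_types, lifting) add.commute add.left_commute distrib_left mod_mult_self2 mult.commute)
          also have "\<dots> = a 0 + a i" using ai[of i] True False by simp
          finally show ?thesis using False True a0 by (simp add: aof_def hmap_def pa)
        next
          case False2: False
          then show ?thesis using a False unfolding Fset_def by (simp add: aof_def hmap_def pa)
        qed
      qed
    qed
    show "(aof s Q (hmap Q p), \<lambda>i. (hmap Q p i - aof s Q (hmap Q p) i) div int Q) = p"
      using aeq Qp by (simp add: pa hmap_def)
  qed
  have inv2: "hmap Q (aof s Q n, \<lambda>i. (n i - aof s Q n i) div int Q) = n" if n: "\<forall>i>s. n i = 0" for n
  proof
    fix i
    have "int Q dvd (n i - aof s Q n i)"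
    proof -
      consider "i = 0" | "i \<noteq> 0" "i \<le> s" | "i > s" by linarith
      then show ?thesis
      proof cases
        case 1 then show ?thesis by (simp add: aof_def)
      next
        case 2
        have "n i - aof s Q n i = (n 0 + n i - (n 0 + n i) mod int Q) - (n 0 - n 0 mod int Q)"
          using 2 by (simp add: aof_def)
        also have "int Q dvd \<dots>"
          by (rule dvd_diff; rule dvd_minus_mod)
        finally show ?thesis .
      next
        case 3 then show ?thesis using n by (simp add: aof_def)
      qed
    qed
    then show "hmap Q (aof s Q n, \<lambda>i. (n i - aof s Q n i) div int Q) i = n i"
      by (simp add: hmap_def)
  qed
  show "\<forall>n\<in>Rset s e (Q*N). hmap Q (aof s Q n, \<lambda>i. (n i - aof s Q n i) div int Q) = n"
    using inv2 by (auto simp: Rset_def)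
  show "hmap Q ` Sigma (Fset s Q) (\<lambda>a. Rset s (dd Q a e) N) \<subseteq> Rset s e (Q*N)"
  proof
    fix m assume "m \<in> hmap Q ` Sigma (Fset s Q) (\<lambda>a. Rset s (dd Q a e) N)"
    then obtain a n where a: "a \<in> Fset s Q" and n: "n \<in> Rset s (dd Q a e) N" and m: "m = hmap Q (a, n)"
      by auto
    have cm: "cube_form m \<omega> = int Q * cube_form n \<omega> + cube_form a \<omega>" for \<omega>
      unfolding m hmap_def by (simp add: cube_lin)
    show "m \<in> Rset s e (Q*N)"
      unfolding Rset_def
    proof (intro CollectI conjI allI impI ballI)
      fix i assume "i > s" then show "m i = 0" using a n by (simp add: m hmap_def Fset_def Rset_def)
    next
      fix \<omega> assume w: "\<omega> \<in> Pow {1..s}"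
      have "0 \<le> cube_form n \<omega> + dd Q a e \<omega> \<and> cube_form n \<omega> + dd Q a e \<omega> < int N"
        using n w unfolding Rset_def by blast
      then have "0 \<le> int Q * cube_form n \<omega> + (cube_form a \<omega> + e \<omega>) \<and> int Q * cube_form n \<omega> + (cube_form a \<omega> + e \<omega>) < int Q * int N"
        using divmod_range[OF Qp] by (simp add: dd_def)
      then show "0 \<le> cube_form m \<omega> + e \<omega>" "cube_form m \<omega> + e \<omega> < int (Q*N)"
        by (simp_all add: cm algebra_simps)
    qed
  qed
  show "(\<lambda>n. (aof s Q n, \<lambda>i. (n i - aof s Q n i) div int Q)) ` Rset s e (Q*N) \<subseteq> Sigma (Fset s Q) (\<lambda>a. Rset s (dd Q a e) N)"
  proof
    fix p assume "p \<in> (\<lambda>n. (aof s Q n, \<lambda>i. (n i - aof s Q n i) div int Q)) ` Rset s e (Q*N)"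
    then obtain m where m: "m \<in> Rset s e (Q*N)" and p: "p = (aof s Q m, \<lambda>i. (m i - aof s Q m i) div int Q)" by auto
    define a where "a = aof s Q m"
    define n where "n = (\<lambda>i. (m i - aof s Q m i) div int Q)"
    have ms: "\<forall>i>s. m i = 0" using m by (simp add: Rset_def)
    have hm: "hmap Q (a, n) = m" using inv2[OF ms] by (simp add: a_def n_def)
    have cm: "cube_form m \<omega> = int Q * cube_form n \<omega> + cube_form a \<omega>" for \<omega>
      unfolding hm[symmetric] hmap_def by (simp add: cube_lin)
    have aF: "a \<in> Fset s Q"
      unfolding Fset_def
    proof (intro CollectI conjI allI impI)
      fix i assume "s < i" then show "a i = 0" by (simp add: a_def aof_def)
    next
      fix i assume i: "i \<le> s"
      show "0 \<le> cube_form a (vs i)" "cube_form a (vs i) < int Q"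
        using Qp i by (auto simp: cube_vs a_def aof_def)
    qed
    have nR: "n \<in> Rset s (dd Q a e) N"
      unfolding Rset_def
    proof (intro CollectI conjI allI impI ballI)
      fix i assume "s < i" then show "n i = 0" using ms by (simp add: n_def aof_def)
    next
      fix \<omega> assume w: "\<omega> \<in> Pow {1..s}"
      have "0 \<le> cube_form m \<omega> + e \<omega> \<and> cube_form m \<omega> + e \<omega> < int (Q*N)"
        using m w unfolding Rset_def by blast
      then have "0 \<le> int Q * cube_form n \<omega> + (cube_form a \<omega> + e \<omega>) \<and> int Q * cube_form n \<omega> + (cube_form a \<omega> + e \<omega>) < int Q * int N"
        by (simp add: cm algebra_simps)
      then show "0 \<le> cube_form n \<omega> + dd Q a e \<omega>" "cube_form n \<omega> + dd Q a e \<omega> < int N"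
        using divmod_range[OF Qp] by (simp_all add: dd_def)
    qed
    show "p \<in> Sigma (Fset s Q) (\<lambda>a. Rset s (dd Q a e) N)"
      using aF nR by (simp add: p a_def n_def)
  qed
qed



definition Xs :: "nat \<Rightarrow> (nat \<Rightarrow> complex) \<Rightarrow> (nat set \<Rightarrow> int) \<Rightarrow> (nat set \<Rightarrow> int) \<Rightarrow> nat \<Rightarrow> complex" where
  "Xs s f d e N = (\<Sum>n\<in>Rset s e N. \<Prod>\<omega>\<in>Pow {1..s}. conj_pow (card \<omega>) (f (nat (cube_form n \<omega> + d \<omega>))))"

definition Wt :: "nat \<Rightarrow> (nat \<Rightarrow> complex) \<Rightarrow> (nat set \<Rightarrow> int) \<Rightarrow> nat \<Rightarrow> (nat \<Rightarrow> int) \<Rightarrow> complex" where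
  "Wt s f d Q a = (\<Prod>\<omega>\<in>Pow {1..s}. conj_pow (card \<omega>) (f (nat ((cube_form a \<omega> + d \<omega>) mod int Q))))"

lemma conj_pow_mult: "conj_pow k (z * w) = conj_pow k z * conj_pow k w"
  by (simp add: conj_pow_def)

lemma qmult_split:
  assumes "q_multiplicative q f" "m < q ^ l"
  shows "f (m + q ^ l * x) = f m * shiftS q l f x"
proof -
  have "q^l dvd q^l*x" by simp
  then show ?thesis using assms unfolding q_multiplicative_def shiftS_def by blast
qed

lemma point_split:
  assumes f: "q_multiplicative q f" and q: "q > 0"
    and w: "\<omega> \<in> Pow {1..s}" and ed: "e \<omega> \<le> d \<omega>"
    and n: "n \<in> Rset s (dd (q^l) a e) N"
  shows "f (nat (cube_form (hmap (q^l) (a, n)) \<omega> + d \<omega>)) =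
     f (nat ((cube_form a \<omega> + d \<omega>) mod int (q^l))) * shiftS q l f (nat (cube_form n \<omega> + dd (q^l) a d \<omega>))"
proof -
  define Q where "Q = int (q^l)"
  have Qp: "Q > 0" using q by (simp add: Q_def)
  define y where "y = cube_form a \<omega> + d \<omega>"
  define x where "x = cube_form n \<omega>"
  define z where "z = x + y div Q"
  define r where "r = y mod Q"
  have r: "0 \<le> r" "r < Q" using Qp by (auto simp: r_def)
  have "0 \<le> x + (cube_form a \<omega> + e \<omega>) div Q"
    using n w unfolding Rset_def dd_def x_def Q_def by blast
  moreover have "(cube_form a \<omega> + e \<omega>) div Q \<le> y div Q"
    unfolding y_def using ed Qp by (intro zdiv_mono1) auto
  ultimately have z: "0 \<le> z" unfolding z_def by linarith
  have c: "cube_form (hmap (q^l) (a, n)) \<omega> + d \<omega> = Q * z + r"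
  proof -
    have "cube_form (hmap (q^l) (a, n)) \<omega> = Q * x + cube_form a \<omega>"
      unfolding hmap_def x_def Q_def by (simp add: cube_lin)
    moreover have "y = Q * (y div Q) + r" unfolding r_def by simp
    ultimately show ?thesis unfolding z_def y_def by (simp add: algebra_simps)
  qed
  have "nat (Q * z + r) = nat r + q^l * nat z"
    using z r by (simp add: Q_def nat_add_distrib nat_mult_distrib nat_power_eq)
  moreover have "nat r < q^l" using r unfolding Q_def by (metis nat_less_iff of_nat_power)
  ultimately have "f (nat (Q * z + r)) = f (nat r) * shiftS q l f (nat z)"
    using qmult_split[OF f] by simp
  then show ?thesis
    unfolding c[symmetric] by (simp add: r_def y_def z_def x_def dd_def Q_def)
qed

lemma Rset_finite: "finite (Rset s e N)" using Rset_bounded by blast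

lemma Xs_rec:
  assumes f: "q_multiplicative q f" and q: "q > 0" and ed: "\<forall>\<omega>\<in>Pow {1..s}. e \<omega> \<le> d \<omega>"
  shows "Xs s f d e (q^l * N) = (\<Sum>a\<in>Fset s (q^l). Wt s f d (q^l) a * Xs s (shiftS q l f) (dd (q^l) a d) (dd (q^l) a e) N)"
proof -
  let ?Q = "q^l"
  let ?\<phi> = "\<lambda>m. \<Prod>\<omega>\<in>Pow {1..s}. conj_pow (card \<omega>) (f (nat (cube_form m \<omega> + d \<omega>)))"
  have Qp: "?Q > 0" using q by simp
  have "Xs s f d e (?Q * N) = (\<Sum>p\<in>Sigma (Fset s ?Q) (\<lambda>a. Rset s (dd ?Q a e) N). ?\<phi> (hmap ?Q p))"
    unfolding Xs_def by (rule sum.reindex_bij_betw[OF hmap_bij[OF Qp], symmetric])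
  also have "\<dots> = (\<Sum>(a,n)\<in>Sigma (Fset s ?Q) (\<lambda>a. Rset s (dd ?Q a e) N). ?\<phi> (hmap ?Q (a, n)))"
    by (simp add: case_prod_beta)
  also have "\<dots> = (\<Sum>a\<in>Fset s ?Q. \<Sum>n\<in>Rset s (dd ?Q a e) N. ?\<phi> (hmap ?Q (a, n)))"
    by (rule sum.Sigma[symmetric]) (auto simp: Fset_finite Rset_finite)
  also have "\<dots> = (\<Sum>a\<in>Fset s ?Q. Wt s f d ?Q a * Xs s (shiftS q l f) (dd ?Q a d) (dd ?Q a e) N)"
  proof (rule sum.cong[OF refl])
    fix a assume a: "a \<in> Fset s ?Q"
    have "(\<Sum>n\<in>Rset s (dd ?Q a e) N. ?\<phi> (hmap ?Q (a, n))) =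
      (\<Sum>n\<in>Rset s (dd ?Q a e) N. Wt s f d ?Q a * (\<Prod>\<omega>\<in>Pow {1..s}. conj_pow (card \<omega>) (shiftS q l f (nat (cube_form n \<omega> + dd ?Q a d \<omega>)))))"
    proof (rule sum.cong[OF refl])
      fix n assume n: "n \<in> Rset s (dd ?Q a e) N"
      have "?\<phi> (hmap ?Q (a, n)) = (\<Prod>\<omega>\<in>Pow {1..s}. conj_pow (card \<omega>) (f (nat ((cube_form a \<omega> + d \<omega>) mod int ?Q))) *
              conj_pow (card \<omega>) (shiftS q l f (nat (cube_form n \<omega> + dd ?Q a d \<omega>))))"
        by (rule prod.cong[OF refl]) (simp add: point_split[OF f q _ _ n] ed conj_pow_mult)
      also have "\<dots> = Wt s f d ?Q a * (\<Prod>\<omega>\<in>Pow {1..s}. conj_pow (card \<omega>) (shiftS q l f (nat (cube_form n \<omega> + dd ?Q a d \<omega>))))"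
        unfolding Wt_def by (rule prod.distrib)
      finally show "?\<phi> (hmap ?Q (a, n)) = \<dots>" .
    qed
    also have "\<dots> = Wt s f d ?Q a * Xs s (shiftS q l f) (dd ?Q a d) (dd ?Q a e) N"
      unfolding Xs_def by (simp add: sum_distrib_left)
    finally show "(\<Sum>n\<in>Rset s (dd ?Q a e) N. ?\<phi> (hmap ?Q (a, n))) = \<dots>" .
  qed
  finally show ?thesis .
qed

lemma card_rec:
  assumes "Q > 0"
  shows "card (Rset s e (Q * N)) = (\<Sum>a\<in>Fset s Q. card (Rset s (dd Q a e) N))"
proof -
  have "card (Rset s e (Q * N)) = card (Sigma (Fset s Q) (\<lambda>a. Rset s (dd Q a e) N))"
    using bij_betw_same_card[OF hmap_bij[OF assms]] by simp
  also have "\<dots> = (\<Sum>a\<in>Fset s Q. card (Rset s (dd Q a e) N))"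
    by (rule card_SigmaI) (auto simp: Fset_finite Rset_finite)
  finally show ?thesis .
qed



lemma norm_conj_pow [simp]: "cmod (conj_pow k z) = cmod z"
  by (simp add: conj_pow_def)

lemma norm_prod_unit:
  assumes "\<And>n. cmod (f n) = 1"
  shows "cmod (\<Prod>\<omega>\<in>A. conj_pow (card \<omega>) (f (g \<omega>))) = 1"
  by (simp add: prod_norm[symmetric] assms)

lemma Xs_triv:
  assumes "\<And>n. cmod (f n) = 1"
  shows "cmod (Xs s f d e N) \<le> card (Rset s e N)"
proof -
  have "cmod (Xs s f d e N) \<le> (\<Sum>n\<in>Rset s e N. cmod (\<Prod>\<omega>\<in>Pow {1..s}. conj_pow (card \<omega>) (f (nat (cube_form n \<omega> + d \<omega>)))))"
    unfolding Xs_def by (rule norm_sum)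
  also have "\<dots> = card (Rset s e N)" by (simp add: prod_norm[symmetric] assms)
  finally show ?thesis .
qed

lemma Wt_norm:
  assumes "\<And>n. cmod (f n) = 1"
  shows "cmod (Wt s f d Q a) = 1"
  unfolding Wt_def by (rule norm_prod_unit[OF assms])

definition emb :: "nat \<Rightarrow> int \<Rightarrow> (nat \<Rightarrow> int) \<Rightarrow> nat \<Rightarrow> int" where
  "emb s c p = (\<lambda>i. if i = 0 then c + p 0 else if i \<le> s then p i else 0)"

lemma emb_inj: "inj_on (emb s c) (\<Pi>\<^sub>E i\<in>{0..s}. B)"
proof (rule inj_onI)
  fix p p' assume p: "p \<in> (\<Pi>\<^sub>E i\<in>{0..s}. B)" and p': "p' \<in> (\<Pi>\<^sub>E i\<in>{0..s}. B)" and eq: "emb s c p = emb s c p'"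
  show "p = p'"
  proof (rule PiE_ext[OF p p'])
    fix i assume "i \<in> {0..s}"
    then show "p i = p' i" using fun_cong[OF eq, of i] by (auto simp: emb_def split: if_splits)
  qed
qed

lemma emb_cube:
  assumes p: "p \<in> (\<Pi>\<^sub>E i\<in>{0..s}. {0..<int k})" and w: "\<omega> \<in> Pow {1..s}"
  shows "c \<le> cube_form (emb s c p) \<omega> \<and> cube_form (emb s c p) \<omega> \<le> c + int (s+1) * (int k - 1)"
proof -
  have pi: "0 \<le> p i \<and> p i \<le> int k - 1" if "i \<le> s" for i using p that by auto
  have cf: "cube_form (emb s c p) \<omega> = c + p 0 + (\<Sum>i\<in>\<omega>. p i)"
    using w unfolding cube_form_def emb_def by (auto intro!: sum.cong)
  have "(\<Sum>i\<in>\<omega>. p i) \<le> of_nat (card \<omega>) * (int k - 1)"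
    by (rule sum_bounded_above) (use w pi in auto)
  moreover have "card \<omega> \<le> s" using w card_mono[of "{1..s}" \<omega>] by auto
  moreover have k0: "0 \<le> int k - 1" using pi[of 0] by simp
  ultimately have "(\<Sum>i\<in>\<omega>. p i) \<le> int s * (int k - 1)"
    using mult_right_mono[of "int (card \<omega>)" "int s" "int k - 1"] by simp
  moreover have "0 \<le> (\<Sum>i\<in>\<omega>. p i)" by (rule sum_nonneg) (use w pi in auto)
  ultimately show ?thesis using cf pi[of 0] by (simp add: algebra_simps)
qed

lemma box_card:
  assumes "finite S" and "\<And>p. p \<in> (\<Pi>\<^sub>E i\<in>{0..s}. {0..<int k}) \<Longrightarrow> emb s c p \<in> S"
  shows "k ^ (s+1) \<le> card S"
proof -
  have "card (\<Pi>\<^sub>E i\<in>{0..s}. {0..<int k}) = k ^ (s+1)" by (simp add: card_PiE)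
  moreover have "card (\<Pi>\<^sub>E i\<in>{0..s}. {0..<int k}) \<le> card S"
    by (rule card_inj_on_le[OF emb_inj _ assms(1)]) (use assms(2) in auto)
  ultimately show ?thesis by simp
qed

lemma Pi_lower:
  assumes "N \<ge> 1"
  shows "real N ^ (s+1) \<le> real (s+1) ^ (s+1) * real (card (Rset s (\<lambda>_. 0) N))"
proof -
  define k where "k = (N - 1) div (s+1) + 1"
  have dm: "N - 1 = (s+1) * ((N-1) div (s+1)) + (N-1) mod (s+1)" by (metis mult_div_mod_eq)
  have mm: "(N-1) mod (s+1) < s+1" by simp
  have k1: "(s+1) * (k - 1) \<le> N - 1" unfolding k_def using times_div_less_eq_dividend[of "s+1" "N-1"] by (simp only: add_diff_cancel_right')
  have k2: "N \<le> (s+1) * k"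
  proof -
    have "(s+1)*k = (s+1)*((N-1) div (s+1)) + (s+1)" by (simp add: k_def algebra_simps)
    then show ?thesis using dm mm assms by linarith
  qed
  have "k ^ (s+1) \<le> card (Rset s (\<lambda>_. 0) N)"
  proof (rule box_card[OF Rset_finite, where c = 0])
    fix p assume p: "p \<in> (\<Pi>\<^sub>E i\<in>{0..s}. {0..<int k})"
    have "k \<ge> 1" by (simp add: k_def)
    then have "int (s+1) * (int k - 1) \<le> int N - 1" using k1
      by (metis (no_types, lifting) assms of_nat_1 of_nat_diff of_nat_le_iff of_nat_mult)
    then show "emb s 0 p \<in> Rset s (\<lambda>_. 0) N"
      unfolding Rset_def
    proof (intro CollectI conjI allI impI ballI)
      fix i :: nat assume "s < i" then show "emb s 0 p i = 0" by (simp add: emb_def)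
    next
      fix \<omega> assume w: "\<omega> \<in> Pow {1..s}"
      note h = emb_cube[OF p w, of 0]
      assume "int (s+1) * (int k - 1) \<le> int N - 1"
      then show "0 \<le> cube_form (emb s 0 p) \<omega> + 0" "cube_form (emb s 0 p) \<omega> + 0 < int N"
        using h by linarith+
    qed
  qed
  then have "real k ^ (s+1) \<le> real (card (Rset s (\<lambda>_. 0) N))" by (metis of_nat_le_iff of_nat_power)
  moreover have "real N ^ (s+1) \<le> (real (s+1) * real k) ^ (s+1)"
  proof (rule power_mono)
    have "real N \<le> real ((s+1) * k)" using k2 by (simp only: of_nat_le_iff)
    then show "real N \<le> real (s+1) * real k" by (simp only: of_nat_mult)
  qed simp
  moreover have "(real (s+1) * real k) ^ (s+1) = real (s+1) ^ (s+1) * real k ^ (s+1)"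
    by (rule power_mult_distrib)
  moreover have "real (s+1) ^ (s+1) * real k ^ (s+1) \<le> real (s+1) ^ (s+1) * real (card (Rset s (\<lambda>_. 0) N))"
    by (rule mult_left_mono) (use calculation(1) in auto)
  ultimately show ?thesis by linarith
qed



lemma idiv_ge:
  fixes Q m y :: int
  assumes "0 < Q" "Q*m \<le> y" shows "m \<le> y div Q"
proof -
  have "(Q*m) div Q \<le> y div Q" using assms by (intro zdiv_mono1) auto
  then show ?thesis using assms by simp
qed

lemma idiv_lt:
  fixes Q m y :: int
  assumes "0 < Q" "y < Q*m" shows "y div Q < m"
proof (rule ccontr)
  assume "\<not> y div Q < m"
  then have "Q*m \<le> Q*(y div Q)" using assms by (intro mult_left_mono) auto
  moreover have "Q*(y div Q) \<le> y" using assms(1)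
    using mult_div_mod_eq[of Q y] pos_mod_sign[OF assms(1), of y] by linarith
  ultimately show False using assms by linarith
qed

definition stateD :: "nat \<Rightarrow> (nat set \<Rightarrow> int) \<Rightarrow> (nat set \<Rightarrow> int) \<Rightarrow> bool" where
  "stateD s d e \<longleftrightarrow> (\<forall>\<omega>\<in>Pow {1..s}. - int s \<le> e \<omega> \<and> e \<omega> \<le> d \<omega> \<and> d \<omega> \<le> e \<omega> + int s \<and> e \<omega> \<le> int s)"

lemma Fset_elem:
  assumes "a \<in> Fset s Q"
  shows "\<forall>i>s. a i = 0" "0 \<le> a 0" "a 0 < int Q" "\<And>i. 1 \<le> i \<Longrightarrow> i \<le> s \<Longrightarrow> 0 \<le> a 0 + a i \<and> a 0 + a i < int Q"
proof -
  show "\<forall>i>s. a i = 0" using assms by (simp add: Fset_def)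
  have h: "\<forall>i\<le>s. 0 \<le> cube_form a (vs i) \<and> cube_form a (vs i) < int Q" using assms by (simp add: Fset_def)
  show "0 \<le> a 0" "a 0 < int Q" using h[rule_format, of 0] by (simp_all add: cube_vs)
  fix i assume "1 \<le> i" "i \<le> s"
  then show "0 \<le> a 0 + a i \<and> a 0 + a i < int Q" using h[rule_format, of i] by (simp add: cube_vs)
qed

lemma Fset_cube:
  assumes a: "a \<in> Fset s Q" and w: "\<omega> \<in> Pow {1..s}"
  shows "- int s * (int Q - 1) \<le> cube_form a \<omega> \<and> cube_form a \<omega> \<le> (int s + 1) * (int Q - 1)"
proof -
  note F = Fset_elem[OF a]
  have ai: "-(int Q - 1) \<le> a i \<and> a i \<le> int Q - 1" if "i \<in> \<omega>" for i
    using F(2,3) F(4)[of i] that w by auto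
  have Q1: "0 \<le> int Q - 1" using F(2,3) by linarith
  have cw: "card \<omega> \<le> s" using w card_mono[of "{1..s}" \<omega>] by auto
  have "of_nat (card \<omega>) * (-(int Q - 1)) \<le> (\<Sum>i\<in>\<omega>. a i)"
    by (rule sum_bounded_below) (use ai in auto)
  moreover have "(\<Sum>i\<in>\<omega>. a i) \<le> of_nat (card \<omega>) * (int Q - 1)"
    by (rule sum_bounded_above) (use ai in auto)
  moreover have "int (card \<omega>) * (int Q - 1) \<le> int s * (int Q - 1)"
    using cw Q1 by (intro mult_right_mono) auto
  moreover have "of_nat (card \<omega>) * (-(int Q - 1)) = - (int (card \<omega>) * (int Q - 1))" by (simp add: algebra_simps)
  moreover have "- int s * (int Q - 1) = - (int s * (int Q - 1))" by simp
  moreover have "(int s + 1) * (int Q - 1) = int s * (int Q - 1) + (int Q - 1)" by (simp add: algebra_simps)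
  moreover have "cube_form a \<omega> = a 0 + (\<Sum>i\<in>\<omega>. a i)" by (simp add: cube_form_def)
  ultimately show ?thesis using F(2,3) by linarith
qed

lemma state_pres:
  assumes st: "stateD s d e" and a: "a \<in> Fset s Q" and Q: "int s < int Q" and s: "1 \<le> int s"
  shows "stateD s (dd Q a d) (dd Q a e)"
  unfolding stateD_def
proof
  fix \<omega> assume w: "\<omega> \<in> Pow {1..s}"
  have Qp: "0 < int Q" using Q by linarith
  note cb = Fset_cube[OF a w]
  have s1: "- int s \<le> e \<omega>" "e \<omega> \<le> d \<omega>" "d \<omega> \<le> e \<omega> + int s" "e \<omega> \<le> int s"
    using st w unfolding stateD_def by auto
  let ?x = "cube_form a \<omega>"
  have "- int s * (int Q - 1) = int Q * (- int s) + int s" by (simp add: algebra_simps)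
  then have "int Q * (- int s) \<le> ?x + e \<omega>"
    using cb s1 by linarith
  then have A: "- int s \<le> dd Q a e \<omega>" unfolding dd_def by (rule idiv_ge[OF Qp])
  have "(int s + 1) * (int Q - 1) = int Q * (int s + 1) - int s - 1" by (simp add: algebra_simps)
  then have "?x + e \<omega> < int Q * (int s + 1)"
    using cb s1 by linarith
  then have B: "dd Q a e \<omega> < int s + 1" unfolding dd_def by (rule idiv_lt[OF Qp])
  have C: "dd Q a e \<omega> \<le> dd Q a d \<omega>" unfolding dd_def using s1 Qp by (intro zdiv_mono1) auto
  have "(?x + d \<omega>) div int Q \<le> (?x + e \<omega> + int Q) div int Q"
    using s1 Q Qp by (intro zdiv_mono1) auto
  also have "\<dots> = (?x + e \<omega>) div int Q + 1" using Qp by simp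
  finally have D: "dd Q a d \<omega> \<le> dd Q a e \<omega> + 1" unfolding dd_def .
  show "- int s \<le> dd Q a e \<omega> \<and> dd Q a e \<omega> \<le> dd Q a d \<omega> \<and> dd Q a d \<omega> \<le> dd Q a e \<omega> + int s \<and> dd Q a e \<omega> \<le> int s"
    using A B C D s by linarith
qed



definition C0 :: "nat \<Rightarrow> nat \<Rightarrow> (nat set \<Rightarrow> int) \<Rightarrow> (nat set \<Rightarrow> int) \<Rightarrow> (nat \<Rightarrow> int) set" where
  "C0 s Q d e = {a \<in> Fset s Q. \<forall>\<omega>\<in>Pow {1..s}. dd Q a d \<omega> = 0 \<and> dd Q a e \<omega> = 0}"

lemma C0_finite: "finite (C0 s Q d e)"
  unfolding C0_def using Fset_finite by simp

lemma trans_lower: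
  assumes s1: "1 \<le> s" and Q: "8*s+2 \<le> Q" and st: "stateD s d e"
  shows "real Q ^ (s+1) \<le> real (2*(s+1)) ^ (s+1) * real (card (C0 s Q d e))"
proof -
  define k where "k = (Q - 3*s) div (s+1)"
  have dm: "Q - 3*s = (s+1) * k + (Q - 3*s) mod (s+1)" unfolding k_def by (metis mult_div_mod_eq)
  have mm: "(Q - 3*s) mod (s+1) < s+1" by simp
  have k1: "(s+1) * k \<le> Q - 3*s" using dm by linarith
  have k2: "Q \<le> 2*(s+1)*k"
  proof -
    have "2*(s+1)*k = 2*((s+1)*k)" by simp
    then show ?thesis using dm mm Q by linarith
  qed
  have k0: "1 \<le> k"
  proof (rule ccontr)
    assume "\<not> 1 \<le> k" then have "k = 0" by simp
    then show False using k2 Q by simp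
  qed
  have ki: "int (s+1) * (int k - 1) + 3 * int s + 1 \<le> int Q"
  proof -
    have "int ((s+1) * k) \<le> int (Q - 3*s)" using k1 by (simp only: of_nat_le_iff)
    then have "int (s+1) * int k \<le> int Q - 3 * int s" using Q by (simp add: of_nat_diff algebra_simps)
    then show ?thesis by (simp add: algebra_simps)
  qed
  have "k ^ (s+1) \<le> card (C0 s Q d e)"
  proof (rule box_card[OF C0_finite, where c = "int s"])
    fix p assume p: "p \<in> (\<Pi>\<^sub>E i\<in>{0..s}. {0..<int k})"
    have cb: "int s \<le> cube_form (emb s (int s) p) \<omega> \<and> cube_form (emb s (int s) p) \<omega> + 2 * int s < int Q"
      if w: "\<omega> \<in> Pow {1..s}" for \<omega>
      using emb_cube[OF p w, of "int s"] ki by linarith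
    have inF: "emb s (int s) p \<in> Fset s Q"
      unfolding Fset_def
    proof (intro CollectI conjI allI impI)
      fix i :: nat assume "s < i" then show "emb s (int s) p i = 0" by (simp add: emb_def)
    next
      fix i assume "i \<le> s"
      then have "vs i \<in> Pow {1..s}" by (rule vs_Pow)
      note c = cb[OF this]
      show "0 \<le> cube_form (emb s (int s) p) (vs i)" "cube_form (emb s (int s) p) (vs i) < int Q"
        using c by linarith+
    qed
    have "\<forall>\<omega>\<in>Pow {1..s}. dd Q (emb s (int s) p) d \<omega> = 0 \<and> dd Q (emb s (int s) p) e \<omega> = 0"
    proof
      fix \<omega> assume w: "\<omega> \<in> Pow {1..s}"
      have s2: "- int s \<le> e \<omega>" "e \<omega> \<le> d \<omega>" "d \<omega> \<le> e \<omega> + int s" "e \<omega> \<le> int s"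
        using st w unfolding stateD_def by auto
      note c = cb[OF w]
      show "dd Q (emb s (int s) p) d \<omega> = 0 \<and> dd Q (emb s (int s) p) e \<omega> = 0"
        unfolding dd_def using c s2 by (intro conjI div_pos_pos_trivial) linarith+
    qed
    then show "emb s (int s) p \<in> C0 s Q d e" using inF by (simp add: C0_def)
  qed
  then have "real k ^ (s+1) \<le> real (card (C0 s Q d e))" by (metis of_nat_le_iff of_nat_power)
  moreover have "real Q ^ (s+1) \<le> (real (2*(s+1)) * real k) ^ (s+1)"
  proof (rule power_mono)
    have "real Q \<le> real (2*(s+1)*k)" using k2 by (simp only: of_nat_le_iff)
    then show "real Q \<le> real (2*(s+1)) * real k" by (simp only: of_nat_mult)
  qed simp
  moreover have "(real (2*(s+1)) * real k) ^ (s+1) = real (2*(s+1)) ^ (s+1) * real k ^ (s+1)"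
    by (rule power_mult_distrib)
  moreover have "real (2*(s+1)) ^ (s+1) * real k ^ (s+1) \<le> real (2*(s+1)) ^ (s+1) * real (card (C0 s Q d e))"
    by (rule mult_left_mono) (use calculation(1) in auto)
  ultimately show ?thesis by linarith
qed

lemma Pi_Rset: "Pi_set s N = Rset s (\<lambda>_. 0) N"
  by (simp add: Pi_set_def Rset_def)

lemma C0_zero:
  assumes "Q > 0" and z: "\<forall>\<omega>\<in>Pow {1..s}. d \<omega> = 0 \<and> e \<omega> = 0"
  shows "C0 s Q d e = Pi_set s Q"
proof
  have Qp: "0 < int Q" using assms by simp
  show "C0 s Q d e \<subseteq> Pi_set s Q"
  proof
    fix a assume a: "a \<in> C0 s Q d e"
    have "0 \<le> cube_form a \<omega> \<and> cube_form a \<omega> < int Q" if w: "\<omega> \<in> Pow {1..s}" for \<omega>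
    proof -
      have "cube_form a \<omega> div int Q = 0" using a w z by (auto simp: C0_def dd_def)
      moreover have "cube_form a \<omega> < 0 \<Longrightarrow> cube_form a \<omega> div int Q < 0"
        using idiv_lt[OF Qp, of "cube_form a \<omega>" 0] by simp
      moreover have "int Q * 1 \<le> cube_form a \<omega> \<Longrightarrow> 1 \<le> cube_form a \<omega> div int Q"
        using idiv_ge[OF Qp] by blast
      ultimately show ?thesis by linarith
    qed
    then show "a \<in> Pi_set s Q" using a by (auto simp: C0_def Fset_def Pi_set_def)
  qed
  show "Pi_set s Q \<subseteq> C0 s Q d e"
  proof
    fix a assume a: "a \<in> Pi_set s Q"
    have h: "0 \<le> cube_form a \<omega> \<and> cube_form a \<omega> < int Q" if w: "\<omega> \<in> Pow {1..s}" for \<omega>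
      using a w by (auto simp: Pi_set_def)
    have "a \<in> Fset s Q" unfolding Fset_def using a h vs_Pow by (auto simp: Pi_set_def)
    moreover have "\<forall>\<omega>\<in>Pow {1..s}. dd Q a d \<omega> = 0 \<and> dd Q a e \<omega> = 0"
      using h z by (auto simp: dd_def)
    ultimately show "a \<in> C0 s Q d e" by (simp add: C0_def)
  qed
qed



lemma step_a:
  fixes G t \<kappa> P :: real and p :: "'a \<Rightarrow> real" and W Y :: "'a \<Rightarrow> complex"
  assumes X: "X = (\<Sum>a\<in>F. W a * Y a)" and W: "\<forall>a\<in>F. cmod (W a) = 1"
    and Y: "\<forall>a\<in>F. cmod (Y a) \<le> p a * G" and YC: "\<forall>a\<in>C. cmod (Y a) \<le> p a * G * (1 - t)"
    and CF: "C \<subseteq> F" and fin: "finite F" and pC: "\<forall>a\<in>C. p a = p0"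
    and P: "P = (\<Sum>a\<in>F. p a)" and mass: "\<kappa> * P \<le> real (card C) * p0"
    and G: "G \<ge> 0" and t: "t \<ge> 0"
  shows "cmod X \<le> P * (G * (1 - \<kappa> * t))"
proof -
  have "cmod X \<le> (\<Sum>a\<in>F. cmod (W a * Y a))" unfolding X by (rule norm_sum)
  also have "\<dots> = (\<Sum>a\<in>F. cmod (Y a))" using W by (simp add: norm_mult)
  also have "\<dots> = (\<Sum>a\<in>F - C. cmod (Y a)) + (\<Sum>a\<in>C. cmod (Y a))"
    by (rule sum.subset_diff[OF CF fin])
  also have "\<dots> \<le> (\<Sum>a\<in>F - C. p a * G) + (\<Sum>a\<in>C. p a * G * (1 - t))"
    using Y YC CF by (intro add_mono sum_mono) auto
  also have "(\<Sum>a\<in>C. p a * G * (1 - t)) = (\<Sum>a\<in>C. p a * G) - real (card C) * p0 * G * t"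
    using pC by (simp add: algebra_simps sum_subtractf)
  also have "(\<Sum>a\<in>F - C. p a * G) + ((\<Sum>a\<in>C. p a * G) - real (card C) * p0 * G * t) =
      (\<Sum>a\<in>F. p a * G) - real (card C) * p0 * G * t"
    using sum.subset_diff[OF CF fin, of "\<lambda>a. p a * G"] by simp
  also have "\<dots> = P * G - real (card C) * p0 * G * t" by (simp add: P sum_distrib_right)
  also have "\<dots> \<le> P * G - \<kappa> * P * G * t"
  proof -
    have "\<kappa> * P * (G * t) \<le> real (card C) * p0 * (G * t)"
      using mass G t by (intro mult_right_mono) auto
    then show ?thesis by (simp add: algebra_simps)
  qed
  also have "\<dots> = P * (G * (1 - \<kappa> * t))" by (simp add: algebra_simps)
  finally show ?thesis .
qed

lemma step_b:
  fixes G t \<kappa> P \<epsilon>0 p0 :: real and p :: "'a \<Rightarrow> real" and W Y :: "'a \<Rightarrow> complex"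
  assumes X: "X = (\<Sum>a\<in>F. W a * Y a)" and W: "\<forall>a\<in>F. cmod (W a) = 1"
    and Y: "\<forall>a\<in>F. cmod (Y a) \<le> p a * G"
    and CF: "C \<subseteq> F" and fin: "finite F" and pC: "\<forall>a\<in>C. p a = p0"
    and YC: "\<forall>a\<in>C. Y a = Y0" and Y0: "cmod Y0 \<le> p0 * G * (1 - t)"
    and S: "cmod (\<Sum>a\<in>C. W a) \<le> real (card C) * (1 - \<epsilon>0)"
    and P: "P = (\<Sum>a\<in>F. p a)" and mass: "\<kappa> * P \<le> real (card C) * p0"
    and G: "G \<ge> 0" and t: "0 \<le> t" "t \<le> \<kappa> / 2" and e: "0 \<le> \<epsilon>0" "\<epsilon>0 \<le> 1"
    and k: "0 < \<kappa>" "\<kappa> \<le> 1" and p0: "0 \<le> p0" and Pn: "0 \<le> P"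
  shows "cmod X \<le> P * (G * ((1 - \<kappa> / 2 * \<epsilon>0) * (1 - \<kappa> * t)))"
proof -
  define u where "u = 1 - (1 - t) * (1 - \<epsilon>0)"
  have ue: "u = t + \<epsilon>0 * (1 - t)" by (simp add: u_def algebra_simps)
  have "0 \<le> \<epsilon>0 * (1 - t)" using t e k by (intro mult_nonneg_nonneg) auto
  then have u0: "0 \<le> u" using ue t by linarith
  have X2: "X = (\<Sum>a\<in>F - C. W a * Y a) + Y0 * (\<Sum>a\<in>C. W a)"
    unfolding X using sum.subset_diff[OF CF fin, of "\<lambda>a. W a * Y a"] YC
    by (simp add: sum_distrib_left mult.commute)
  have "cmod X \<le> cmod (\<Sum>a\<in>F - C. W a * Y a) + cmod Y0 * cmod (\<Sum>a\<in>C. W a)"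
    unfolding X2 by (metis norm_mult norm_triangle_ineq)
  also have "cmod (\<Sum>a\<in>F - C. W a * Y a) \<le> (\<Sum>a\<in>F - C. p a * G)"
  proof -
    have "cmod (\<Sum>a\<in>F - C. W a * Y a) \<le> (\<Sum>a\<in>F - C. cmod (W a * Y a))" by (rule norm_sum)
    also have "\<dots> \<le> (\<Sum>a\<in>F - C. p a * G)" using W Y by (intro sum_mono) (simp add: norm_mult)
    finally show ?thesis .
  qed
  also have "cmod Y0 * cmod (\<Sum>a\<in>C. W a) \<le> (p0 * G * (1 - t)) * (real (card C) * (1 - \<epsilon>0))"
  proof (rule mult_mono[OF Y0 S])
    show "0 \<le> p0 * G * (1 - t)" using p0 G t k by (intro mult_nonneg_nonneg) auto
  qed simp
  also have "(\<Sum>a\<in>F - C. p a * G) = P * G - real (card C) * p0 * G"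
    using sum.subset_diff[OF CF fin, of "\<lambda>a. p a * G"] pC by (simp add: P sum_distrib_right)
  finally have "cmod X \<le> P * G - real (card C) * p0 * G * u"
    by (simp add: u_def algebra_simps)
  also have "\<dots> \<le> P * G - \<kappa> * P * G * u"
  proof -
    have "\<kappa> * P * (G * u) \<le> real (card C) * p0 * (G * u)"
      using mass G u0 by (intro mult_right_mono) auto
    then show ?thesis by (simp add: algebra_simps)
  qed
  also have "\<dots> = P * G * (1 - \<kappa> * u)" by (simp add: algebra_simps)
  also have "\<dots> \<le> P * G * ((1 - \<kappa> / 2 * \<epsilon>0) * (1 - \<kappa> * t))"
  proof (rule mult_left_mono)
    have "(1 - \<kappa> / 2 * \<epsilon>0) * (1 - \<kappa> * t) - (1 - \<kappa> * u) = \<epsilon>0 * \<kappa> * (1/2 - t + \<kappa> * t / 2)"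
      unfolding u_def by (simp add: field_simps)
    moreover have "0 \<le> \<epsilon>0 * \<kappa> * (1/2 - t + \<kappa> * t / 2)"
      using e k t by (intro mult_nonneg_nonneg) auto
    ultimately show "1 - \<kappa> * u \<le> (1 - \<kappa> / 2 * \<epsilon>0) * (1 - \<kappa> * t)" by linarith
  qed (use G Pn in simp)
  finally show ?thesis by (simp add: algebra_simps)
qed



lemma Rset_cong: "\<forall>\<omega>\<in>Pow {1..s}. e \<omega> = e' \<omega> \<Longrightarrow> Rset s e N = Rset s e' N"
  unfolding Rset_def by auto

lemma Xs_cong:
  assumes "\<forall>\<omega>\<in>Pow {1..s}. d \<omega> = d' \<omega> \<and> e \<omega> = e' \<omega>"
  shows "Xs s f d e N = Xs s f d' e' N"
proof -
  have R: "Rset s e N = Rset s e' N" using assms by (intro Rset_cong) blast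
  show ?thesis unfolding Xs_def R
  proof (rule sum.cong[OF refl], rule prod.cong[OF refl])
    fix n \<omega> assume "\<omega> \<in> Pow {1..s}"
    then have "d \<omega> = d' \<omega>" using assms by blast
    then show "conj_pow (card \<omega>) (f (nat (cube_form n \<omega> + d \<omega>))) = conj_pow (card \<omega>) (f (nat (cube_form n \<omega> + d' \<omega>)))"
      by simp
  qed
qed

lemma shift_qmult:
  assumes "q_multiplicative q f" and q0: "q > 0"
  shows "q_multiplicative q (shiftS q l f)"
  unfolding q_multiplicative_def
proof (intro allI impI)
  fix t m n assume h: "m < q ^ t \<and> q ^ t dvd n"
  have "q^l * m < q^(l+t)"
  proof -
    show ?thesis using h q0 by (simp add: power_add)
  qed
  moreover have "q^(l+t) dvd q^l * n" using h by (simp add: power_add)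
  ultimately have "f (q^l * m + q^l * n) = f (q^l * m) * f (q^l * n)"
    using assms unfolding q_multiplicative_def by blast
  then show "shiftS q l f (m + n) = shiftS q l f m * shiftS q l f n"
    by (simp add: shiftS_def distrib_left)
qed

lemma shiftS_shiftS: "shiftS q a (shiftS q b f) = shiftS q (a + b) f"
  by (rule ext) (simp add: shiftS_def power_add ac_simps)

lemma shiftS_0: "shiftS q 0 f = f"
  by (rule ext) (simp add: shiftS_def)

definition hyp :: "nat \<Rightarrow> nat \<Rightarrow> nat \<Rightarrow> (nat \<Rightarrow> complex) \<Rightarrow> (nat \<Rightarrow> nat) \<Rightarrow> (nat \<Rightarrow> real) \<Rightarrow> bool" where
  "hyp q s l0 f K \<epsilon> \<longleftrightarrow> (\<forall>n. cmod (f n) = 1) \<and> q_multiplicative q f \<and>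
       K 0 = 0 \<and> (\<forall>i. \<epsilon> i > 0) \<and> (\<forall>i. K i + l0 \<le> K (Suc i)) \<and>
       (\<forall>i. gowers_norm s (q ^ (K (Suc i) - K i)) (shiftS q (K i) f) \<le> 1 - \<epsilon> i)"

lemma hyp_mono:
  fixes K :: "nat \<Rightarrow> nat" and l0 :: nat
  assumes "\<forall>i. K i + l0 \<le> K (Suc i)" "i \<le> j" shows "K i \<le> K j"
proof -
  have m: "K n \<le> K (Suc n)" for n
  proof -
    have "K n + l0 \<le> K (Suc n)" using assms(1) by blast
    then show ?thesis by linarith
  qed
  show ?thesis by (rule lift_Suc_mono_le[of K, OF m assms(2)])
qed

lemma hyp_shift:
  assumes "hyp q s l0 f K \<epsilon>" and q0: "q > 0"
  shows "hyp q s l0 (shiftS q (K 1) f) (\<lambda>i. K (Suc i) - K 1) (\<lambda>i. \<epsilon> (Suc i))"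
proof -
  have Km: "K 1 \<le> K (Suc i)" for i using hyp_mono[of K l0 1 "Suc i"] assms by (simp add: hyp_def)
  have f1: "\<forall>n. cmod (shiftS q (K 1) f n) = 1" using assms by (simp add: hyp_def shiftS_def)
  have f2: "q_multiplicative q (shiftS q (K 1) f)" using assms shift_qmult[OF _ q0] by (simp add: hyp_def)
  have hK: "\<forall>i. K i + l0 \<le> K (Suc i)" using assms by (simp add: hyp_def)
  have f3: "\<forall>i. K (Suc i) - K 1 + l0 \<le> K (Suc (Suc i)) - K 1"
  proof
    fix i show "K (Suc i) - K 1 + l0 \<le> K (Suc (Suc i)) - K 1" using Km[of i] hK[rule_format, of "Suc i"] by linarith
  qed
  have f4: "gowers_norm s (q ^ ((K (Suc (Suc i)) - K 1) - (K (Suc i) - K 1))) (shiftS q (K (Suc i) - K 1) (shiftS q (K 1) f)) \<le> 1 - \<epsilon> (Suc i)" for i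
  proof -
    have "(K (Suc (Suc i)) - K 1) - (K (Suc i) - K 1) = K (Suc (Suc i)) - K (Suc i)" using Km[of i] Km[of "Suc i"] by simp
    moreover have "shiftS q (K (Suc i) - K 1) (shiftS q (K 1) f) = shiftS q (K (Suc i)) f"
      using Km[of i] by (simp add: shiftS_shiftS)
    ultimately show ?thesis using assms by (simp add: hyp_def)
  qed
  have f5: "\<forall>i. \<epsilon> (Suc i) > 0" using assms by (simp add: hyp_def)
  show ?thesis unfolding hyp_def using f1 f2 f3 f4 f5 by simp
qed

definition ga :: "real \<Rightarrow> (nat \<Rightarrow> real) \<Rightarrow> nat \<Rightarrow> real" where
  "ga \<alpha> \<epsilon> M = (\<Prod>i<M. if i = 0 then 1 else 1 - \<alpha> * \<epsilon> i)"

lemma ga_Suc: "ga \<alpha> \<epsilon> (Suc M) = (if M = 0 then 1 else 1 - \<alpha> * \<epsilon> 1) * ga \<alpha> (\<lambda>i. \<epsilon> (Suc i)) M"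
proof (cases M)
  case 0 then show ?thesis by (simp add: ga_def)
next
  case (Suc M')
  have "ga \<alpha> \<epsilon> (Suc M) = (\<Prod>i<M. 1 - \<alpha> * \<epsilon> (Suc i))"
    unfolding ga_def by (subst prod.lessThan_Suc_shift) simp
  also have "\<dots> = (1 - \<alpha> * \<epsilon> 1) * (\<Prod>i<M'. 1 - \<alpha> * \<epsilon> (Suc (Suc i)))"
    unfolding Suc by (subst prod.lessThan_Suc_shift) simp
  also have "ga \<alpha> (\<lambda>i. \<epsilon> (Suc i)) M = (\<Prod>i<M'. 1 - \<alpha> * \<epsilon> (Suc (Suc i)))"
    unfolding ga_def Suc by (subst prod.lessThan_Suc_shift) simp
  ultimately show ?thesis using Suc by simp
qed

lemma ga_nonneg:
  assumes "\<forall>i. 0 \<le> \<alpha> * \<epsilon> i \<and> \<alpha> * \<epsilon> i \<le> 1"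
  shows "0 \<le> ga \<alpha> \<epsilon> M"
  unfolding ga_def using assms by (intro prod_nonneg) auto

lemma ga_exp:
  assumes "\<forall>i. 0 \<le> \<epsilon> i \<and> \<epsilon> i \<le> 1" "0 \<le> \<alpha>" "\<alpha> \<le> 1"
  shows "ga \<alpha> \<epsilon> M \<le> exp \<alpha> * exp (- \<alpha> * (\<Sum>i<M. \<epsilon> i))"
proof -
  have "ga \<alpha> \<epsilon> M \<le> (\<Prod>i<M. exp ((if i = 0 then \<alpha> else 0) - \<alpha> * \<epsilon> i))"
    unfolding ga_def
  proof (rule prod_mono, intro conjI)
    fix i assume "i \<in> {..<M}"
    have e: "0 \<le> \<epsilon> i" "\<epsilon> i \<le> 1" using assms by auto
    show "0 \<le> (if i = 0 then 1 else 1 - \<alpha> * \<epsilon> i)"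
      using e assms mult_left_le[of "\<epsilon> i" \<alpha>] by auto
    show "(if i = 0 then 1 else 1 - \<alpha> * \<epsilon> i) \<le> exp ((if i = 0 then \<alpha> else 0) - \<alpha> * \<epsilon> i)"
    proof (cases "i = 0")
      case True
      have "0 \<le> \<alpha> - \<alpha> * \<epsilon> i" using e assms mult_left_le[of "\<epsilon> i" \<alpha>] by auto
      then show ?thesis using True by simp
    next
      case False
      then show ?thesis using exp_ge_add_one_self[of "- \<alpha> * \<epsilon> i"] by simp
    qed
  qed
  also have "\<dots> = exp (\<Sum>i<M. (if i = 0 then \<alpha> else 0) - \<alpha> * \<epsilon> i)"
    by (simp add: exp_sum)
  also have "(\<Sum>i<M. (if i = 0 then \<alpha> else 0) - \<alpha> * \<epsilon> i) = (\<Sum>i<M. (if i = 0 then \<alpha> else 0)) - \<alpha> * (\<Sum>i<M. \<epsilon> i)"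
    by (simp add: sum_subtractf sum_distrib_left)
  also have "(\<Sum>i<M. (if i = 0 then \<alpha> else 0)) \<le> \<alpha>"
    using assms by (simp add: sum.If_cases)
  then have "exp ((\<Sum>i<M. (if i = 0 then \<alpha> else 0)) - \<alpha> * (\<Sum>i<M. \<epsilon> i)) \<le> exp (\<alpha> - \<alpha> * (\<Sum>i<M. \<epsilon> i))"
    by simp
  also have "\<dots> = exp \<alpha> * exp (- \<alpha> * (\<Sum>i<M. \<epsilon> i))" by (simp add: exp_add[symmetric])
  finally show ?thesis .
qed



lemma mass:
  assumes s1: "1 \<le> s" and Q: "8*s+2 \<le> Q" and st: "stateD s d e" and N: "1 \<le> N"
  shows "(1 / real (2*(s+1)*(s+1)) ^ (s+1)) * real (card (Rset s e (Q * N)))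
          \<le> real (card (C0 s Q d e)) * real (card (Rset s (\<lambda>_. 0) N))"
proof -
  define K0 where "K0 = real (2*(s+1)*(s+1)) ^ (s+1)"
  have "0 < real (2*(s+1)*(s+1))" by (simp only: of_nat_0_less_iff) simp
  then have K0p: "0 < K0" unfolding K0_def by (rule zero_less_power)
  have "real (card (Rset s e (Q * N))) \<le> real ((Q*N)^(s+1))"
    using Rset_bounded[of s e "Q*N"] by (simp only: of_nat_le_iff)
  also have "\<dots> = real Q ^ (s+1) * real N ^ (s+1)" by (simp add: power_mult_distrib)
  also have "\<dots> \<le> (real (2*(s+1)) ^ (s+1) * real (card (C0 s Q d e))) * (real (s+1) ^ (s+1) * real (card (Rset s (\<lambda>_. 0) N)))"
    using trans_lower[OF s1 Q st] Pi_lower[OF N, of s] by (intro mult_mono) auto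
  also have "\<dots> = K0 * (real (card (C0 s Q d e)) * real (card (Rset s (\<lambda>_. 0) N)))"
  proof -
    have "K0 = (real (2*(s+1)) * real (s+1))^(s+1)" unfolding K0_def by (simp only: of_nat_mult)
    also have "\<dots> = real (2*(s+1)) ^ (s+1) * real (s+1) ^ (s+1)" by (rule power_mult_distrib)
    finally show ?thesis by (simp only: ac_simps)
  qed
  finally have "real (card (Rset s e (Q * N))) \<le> K0 * (real (card (C0 s Q d e)) * real (card (Rset s (\<lambda>_. 0) N)))" .
  then show ?thesis using K0p unfolding K0_def[symmetric] by (simp add: field_simps)
qed

lemma gowers_bound:
  assumes f: "\<forall>n. cmod (f n) = 1" and g: "gowers_norm s N f \<le> 1 - \<epsilon>"
  shows "cmod (\<Sum>n\<in>Pi_set s N. \<Prod>\<omega>\<in>Pow {1..s}. conj_pow (card \<omega>) (f (nat (cube_form n \<omega>))))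
           \<le> real (card (Pi_set s N)) * (1 - \<epsilon>)"
proof -
  define S where "S = (\<Sum>n\<in>Pi_set s N. \<Prod>\<omega>\<in>Pow {1..s}. conj_pow (card \<omega>) (f (nat (cube_form n \<omega>))))"
  define c where "c = card (Pi_set s N)"
  have fin: "finite (Pi_set s N)" unfolding Pi_Rset by (rule Rset_finite)
  have "S = Xs s f (\<lambda>_. 0) (\<lambda>_. 0) N" unfolding S_def Xs_def Pi_Rset by simp
  then have Sc: "cmod S \<le> real c" unfolding c_def Pi_Rset using Xs_triv[of f s "\<lambda>_. 0" "\<lambda>_. 0" N] f by simp
  show ?thesis
  proof (cases "c = 0")
    case True
    then have "Pi_set s N = {}" using fin by (simp add: c_def)
    then show ?thesis by simp
  next
    case False
    define x where "x = cmod (S / of_nat c)"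
    have xc: "cmod S = real c * x" unfolding x_def using False by (simp add: norm_divide)
    have x0: "0 \<le> x" "x \<le> 1" using Sc False unfolding x_def by (auto simp: norm_divide field_simps)
    have "x = x powr 1" using x0 by simp
    also have "\<dots> \<le> x powr (1 / 2 ^ s)"
      by (rule powr_mono') (use x0 in auto)
    also have "\<dots> = gowers_norm s N f" unfolding x_def gowers_norm_def gowers_avg_def S_def c_def by simp
    finally have "x \<le> 1 - \<epsilon>" using g by linarith
    then have "real c * x \<le> real c * (1 - \<epsilon>)" by (intro mult_left_mono) auto
    then show ?thesis using xc unfolding S_def c_def by simp
  qed
qed

lemma two_pow_ge: "l < (q::nat) ^ l" if "2 \<le> q"
proof -
  have "l < 2 ^ l" by (rule less_exp)
  also have "(2::nat) ^ l \<le> q ^ l" using that by (intro power_mono) auto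
  finally show ?thesis .
qed



lemma eps_le1: "hyp q s l0 f K \<epsilon> \<Longrightarrow> \<epsilon> i \<le> 1"
proof -
  assume h: "hyp q s l0 f K \<epsilon>"
  have "0 \<le> gowers_norm s (q ^ (K (Suc i) - K i)) (shiftS q (K i) f)" by (simp add: gowers_norm_def)
  then show ?thesis using h unfolding hyp_def by (metis diff_ge_0_iff_ge order_trans)
qed

lemma inv_le1: "1 \<le> (x::real) \<Longrightarrow> 1 / x \<le> 1" by simp

lemma main:
  fixes q s l0 :: nat and \<kappa> :: real
  assumes q: "q \<ge> 2" and s: "s \<ge> 1" and l0: "8*s+2 \<le> l0"
    and \<kappa>: "\<kappa> = 1 / real (2*(s+1)*(s+1)) ^ (s+1)"
  shows "\<forall>f K \<epsilon>. hyp q s l0 f K \<epsilon> \<longrightarrow> (\<forall>L d e. K M \<le> L \<longrightarrow> stateD s d e \<longrightarrow>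
    cmod (Xs s f d e (q^L)) \<le> real (card (Rset s e (q^L))) * ga (\<kappa>*(\<kappa>/2)) \<epsilon> M \<and>
    ((\<forall>\<omega>\<in>Pow {1..s}. d \<omega> = 0 \<and> e \<omega> = 0) \<longrightarrow>
      cmod (Xs s f d e (q^L)) \<le> real (card (Rset s e (q^L))) * ((if M = 0 then 1 else 1 - \<kappa>/2 * \<epsilon> 0) * ga (\<kappa>*(\<kappa>/2)) \<epsilon> M)))"
proof (induction M)
  case 0
  show ?case
  proof (intro allI impI)
    fix f K \<epsilon> L d e assume h: "hyp q s l0 f K \<epsilon>"
    then have "cmod (Xs s f d e (q^L)) \<le> real (card (Rset s e (q^L)))"
      by (intro Xs_triv) (simp add: hyp_def)
    then show "cmod (Xs s f d e (q^L)) \<le> real (card (Rset s e (q^L))) * ga (\<kappa>*(\<kappa>/2)) \<epsilon> 0 \<and>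
    ((\<forall>\<omega>\<in>Pow {1..s}. d \<omega> = 0 \<and> e \<omega> = 0) \<longrightarrow>
      cmod (Xs s f d e (q^L)) \<le> real (card (Rset s e (q^L))) * ((if 0 = 0 then 1 else 1 - \<kappa>/2 * \<epsilon> 0) * ga (\<kappa>*(\<kappa>/2)) \<epsilon> 0))"
      by (simp add: ga_def)
  qed
next
  case (Suc M)
  have "0 < real (2*(s+1)*(s+1))" by (simp only: of_nat_0_less_iff) simp
  then have "0 < real (2*(s+1)*(s+1)) ^ (s+1)" by (rule zero_less_power)
  then have k0: "0 < \<kappa>" unfolding \<kappa> by simp
  have k1: "\<kappa> \<le> 1"
  proof -
    have "(1::nat) \<le> 2*(s+1)*(s+1)" by simp
    then have "real 1 \<le> real (2*(s+1)*(s+1))" by (simp only: of_nat_le_iff)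
    then have "1 \<le> real (2*(s+1)*(s+1))" by simp
    then have "1 \<le> real (2*(s+1)*(s+1)) ^ (s+1)" by (rule one_le_power)
    then show ?thesis unfolding \<kappa> by (rule inv_le1)
  qed
  let ?\<alpha> = "\<kappa>*(\<kappa>/2)"
  have "\<kappa> * (\<kappa>/2) \<le> 1 * 1" using k0 k1 by (intro mult_mono) auto
  then have a0: "0 \<le> ?\<alpha>" "?\<alpha> \<le> 1" using k0 by auto
  show ?case
  proof (intro allI impI)
    fix f K \<epsilon> L d e
    assume h: "hyp q s l0 f K \<epsilon>" and KL: "K (Suc M) \<le> L" and st: "stateD s d e"
    define l where "l = K 1"
    define Q where "Q = q ^ l"
    define L' where "L' = L - l"
    define f' where "f' = shiftS q l f"
    define K' where "K' = (\<lambda>i. K (Suc i) - K 1)"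
    define \<epsilon>' where "\<epsilon>' = (\<lambda>i. \<epsilon> (Suc i))"
    have hK: "\<forall>i. K i + l0 \<le> K (Suc i)" and K0: "K 0 = 0" and fu: "\<forall>n. cmod (f n) = 1"
      and fq: "q_multiplicative q f" and epos: "\<forall>i. \<epsilon> i > 0"
      using h by (auto simp: hyp_def)
    have ele: "\<epsilon> i \<le> 1" for i using eps_le1[OF h] .
    have ll0: "l0 \<le> l" unfolding l_def using hK[rule_format, of 0] K0 by simp
    have lL: "l \<le> L" unfolding l_def using hyp_mono[OF hK, of 1 "Suc M"] KL by simp
    have Q8: "8*s+2 \<le> Q" unfolding Q_def using two_pow_ge[OF q, of l] ll0 l0 by linarith
    have Qs: "int s < int Q" using Q8 by simp
    have qp: "q > 0" using q by simp
    have qL: "q^L = Q * q^L'" unfolding Q_def L'_def using lL by (simp add: power_add[symmetric])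
    have h': "hyp q s l0 f' K' \<epsilon>'" unfolding f'_def K'_def \<epsilon>'_def l_def by (rule hyp_shift[OF h qp])
    have KL': "K' M \<le> L'" unfolding K'_def L'_def l_def using KL by simp
    have N1: "1 \<le> q^L'" using qp by simp
    define G where "G = ga ?\<alpha> \<epsilon>' M"
    define t where "t = (if M = 0 then 0 else \<kappa>/2 * \<epsilon> 1)"
    have t0: "0 \<le> t" "t \<le> \<kappa>/2" unfolding t_def using epos ele[of 1] k0
      by (auto simp: mult_le_cancel_left1 less_imp_le)
    have "0 \<le> ?\<alpha> * \<epsilon>' i \<and> ?\<alpha> * \<epsilon>' i \<le> 1" for i
    proof
      have e0: "0 \<le> \<epsilon>' i" and e1: "\<epsilon>' i \<le> 1" using epos ele unfolding \<epsilon>'_def by (auto simp: less_imp_le)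
      show "0 \<le> ?\<alpha> * \<epsilon>' i" by (rule mult_nonneg_nonneg[OF a0(1) e0])
      show "?\<alpha> * \<epsilon>' i \<le> 1" by (rule mult_le_one[OF a0(2) e0 e1])
    qed
    then have G0: "0 \<le> G" unfolding G_def by (intro ga_nonneg) blast
    have gaS: "ga ?\<alpha> \<epsilon> (Suc M) = G * (1 - \<kappa> * t)"
      unfolding ga_Suc G_def t_def \<epsilon>'_def by (simp add: algebra_simps)
    have gbS: "(if M = 0 then 1 else 1 - \<kappa>/2 * \<epsilon>' 0) * ga ?\<alpha> \<epsilon>' M = G * (1 - t)"
      unfolding G_def t_def \<epsilon>'_def by simp
    note IH = Suc.IH[rule_format, OF h' KL']
    define Y where "Y a = Xs s f' (dd Q a d) (dd Q a e) (q^L')" for a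
    define p where "p a = real (card (Rset s (dd Q a e) (q^L')))" for a
    define p0 where "p0 = real (card (Rset s (\<lambda>_. 0) (q^L')))"
    define F where "F = Fset s Q"
    define C where "C = C0 s Q d e"
    define P where "P = real (card (Rset s e (q^L)))"
    have ed: "\<forall>\<omega>\<in>Pow {1..s}. e \<omega> \<le> d \<omega>" using st by (simp add: stateD_def)
    have X: "Xs s f d e (q^L) = (\<Sum>a\<in>F. Wt s f d Q a * Y a)"
      unfolding qL Q_def F_def Y_def f'_def by (rule Xs_rec[OF fq qp ed])
    have W: "\<forall>a\<in>F. cmod (Wt s f d Q a) = 1" using Wt_norm fu by blast
    have stA: "stateD s (dd Q a d) (dd Q a e)" if "a \<in> F" for a
      using state_pres[OF st _ Qs] that s unfolding F_def by simp
    have Yb: "\<forall>a\<in>F. cmod (Y a) \<le> p a * G"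
      using IH stA unfolding Y_def p_def G_def by blast
    have CF: "C \<subseteq> F" unfolding C_def F_def C0_def by auto
    have fin: "finite F" unfolding F_def by (rule Fset_finite)
    have zC: "\<forall>\<omega>\<in>Pow {1..s}. dd Q a d \<omega> = 0 \<and> dd Q a e \<omega> = 0" if "a \<in> C" for a
      using that unfolding C_def C0_def by blast
    have pC: "\<forall>a\<in>C. p a = p0"
      unfolding p_def p0_def using zC Rset_cong by (metis (no_types, lifting))
    have YC: "\<forall>a\<in>C. cmod (Y a) \<le> p a * G * (1 - t)"
    proof
      fix a assume a: "a \<in> C"
      have "cmod (Y a) \<le> p a * ((if M = 0 then 1 else 1 - \<kappa>/2 * \<epsilon>' 0) * ga ?\<alpha> \<epsilon>' M)"
        using IH stA[of a] zC[OF a] CF a unfolding Y_def p_def by blast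
      then show "cmod (Y a) \<le> p a * G * (1 - t)" unfolding gbS by (simp add: algebra_simps)
    qed
    have Psum: "P = (\<Sum>a\<in>F. p a)"
      unfolding P_def p_def F_def qL Q_def using card_rec[of "q^l" s e "q^L'"] qp by simp
    have massC: "\<kappa> * P \<le> real (card C) * p0"
      unfolding P_def C_def p0_def qL \<kappa> using mass[OF s Q8 st N1] by simp
    have partA: "cmod (Xs s f d e (q^L)) \<le> P * ga ?\<alpha> \<epsilon> (Suc M)"
      unfolding gaS using step_a[OF X W Yb YC CF fin pC Psum massC G0 t0(1)] by simp
    show "cmod (Xs s f d e (q^L)) \<le> real (card (Rset s e (q^L))) * ga ?\<alpha> \<epsilon> (Suc M) \<and>
      ((\<forall>\<omega>\<in>Pow {1..s}. d \<omega> = 0 \<and> e \<omega> = 0) \<longrightarrow>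
       cmod (Xs s f d e (q^L)) \<le> real (card (Rset s e (q^L))) * ((if Suc M = 0 then 1 else 1 - \<kappa>/2 * \<epsilon> 0) * ga ?\<alpha> \<epsilon> (Suc M)))"
    proof (intro conjI impI)
      show "cmod (Xs s f d e (q^L)) \<le> real (card (Rset s e (q^L))) * ga ?\<alpha> \<epsilon> (Suc M)"
        using partA unfolding P_def .
    next
      assume z: "\<forall>\<omega>\<in>Pow {1..s}. d \<omega> = 0 \<and> e \<omega> = 0"
      have Qp: "Q > 0" unfolding Q_def using qp by simp
      have CPi: "C = Pi_set s Q" unfolding C_def by (rule C0_zero[OF Qp z])
      define Y0 where "Y0 = Xs s f' (\<lambda>_. 0) (\<lambda>_. 0) (q^L')"
      have YC0: "\<forall>a\<in>C. Y a = Y0" unfolding Y_def Y0_def using zC Xs_cong by (metis (no_types, lifting))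
      have st0: "stateD s (\<lambda>_. 0) (\<lambda>_. 0)" by (simp add: stateD_def)
      have "cmod Y0 \<le> p0 * ((if M = 0 then 1 else 1 - \<kappa>/2 * \<epsilon>' 0) * ga ?\<alpha> \<epsilon>' M)"
        using IH[OF st0] unfolding Y0_def p0_def by simp
      then have Y0b: "cmod Y0 \<le> p0 * G * (1 - t)" unfolding gbS by (simp add: algebra_simps)
      have Wg: "Wt s f d Q a = (\<Prod>\<omega>\<in>Pow {1..s}. conj_pow (card \<omega>) (f (nat (cube_form a \<omega>))))" if a: "a \<in> Pi_set s Q" for a
        unfolding Wt_def
      proof (rule prod.cong[OF refl])
        fix \<omega> assume w: "\<omega> \<in> Pow {1..s}"
        have "0 \<le> cube_form a \<omega>" "cube_form a \<omega> < int Q" using a w by (auto simp: Pi_set_def)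
        moreover have "d \<omega> = 0" using z w by blast
        ultimately show "conj_pow (card \<omega>) (f (nat ((cube_form a \<omega> + d \<omega>) mod int Q))) = conj_pow (card \<omega>) (f (nat (cube_form a \<omega>)))"
          by simp
      qed
      have gn: "gowers_norm s Q f \<le> 1 - \<epsilon> 0"
        using h K0 unfolding hyp_def Q_def l_def by (metis shiftS_0 diff_zero One_nat_def)
      have S: "cmod (\<Sum>a\<in>C. Wt s f d Q a) \<le> real (card C) * (1 - \<epsilon> 0)"
        unfolding CPi using gowers_bound[OF fu gn] Wg by (simp cong: sum.cong)
      have p0n: "0 \<le> p0" unfolding p0_def by simp
      have Pn: "0 \<le> P" unfolding P_def by simp
      have "cmod (Xs s f d e (q^L)) \<le> P * (G * ((1 - \<kappa> / 2 * \<epsilon> 0) * (1 - \<kappa> * t)))"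
        by (rule step_b[OF X W Yb CF fin pC YC0 Y0b S Psum massC G0 t0 _ ele k0 k1 p0n Pn])
           (use epos in \<open>simp add: less_imp_le\<close>)
      then show "cmod (Xs s f d e (q^L)) \<le> real (card (Rset s e (q^L))) * ((if Suc M = 0 then 1 else 1 - \<kappa>/2 * \<epsilon> 0) * ga ?\<alpha> \<epsilon> (Suc M))"
        unfolding gaS P_def by (simp add: algebra_simps)
    qed
  qed
qed



theorem proposition3p3:
  fixes q s :: nat
  assumes "q \<ge> 2" and "s \<ge> 2"
  shows "\<exists>l0::nat. \<exists>c::real. \<exists>C::real. c > 0 \<and> C > 0 \<and>
    (\<forall>(f :: nat \<Rightarrow> complex) (K :: nat \<Rightarrow> nat) (\<epsilon> :: nat \<Rightarrow> real).
       (\<forall>n. cmod (f n) = 1) \<and> q_multiplicative q f \<and>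
       K 0 = 0 \<and> (\<forall>i. \<epsilon> i > 0) \<and> (\<forall>i. K i + l0 \<le> K (Suc i)) \<and>
       (\<forall>i. gowers_norm s (q ^ (K (Suc i) - K i)) (shiftS q (K i) f) \<le> 1 - \<epsilon> i)
     \<longrightarrow>
       (\<forall>M Kb (r :: nat set \<Rightarrow> nat). Kb \<ge> K M \<and> (\<forall>\<omega>\<in>Pow {1..s}. r \<omega> \<le> s) \<longrightarrow>
          cmod (A_avg q s f r Kb) \<le> C * exp (- c * (\<Sum>i<M. \<epsilon> i))))"
proof -
  define \<kappa> :: real where "\<kappa> = 1 / real (2*(s+1)*(s+1)) ^ (s+1)"
  have s1: "s \<ge> 1" using assms(2) by simp
  have "0 < real (2*(s+1)*(s+1))" by (simp only: of_nat_0_less_iff) simp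
  then have "0 < real (2*(s+1)*(s+1)) ^ (s+1)" by (rule zero_less_power)
  then have k0: "0 < \<kappa>" unfolding \<kappa>_def by simp
  have k1: "\<kappa> \<le> 1"
  proof -
    have "(1::nat) \<le> 2*(s+1)*(s+1)" by simp
    then have "real 1 \<le> real (2*(s+1)*(s+1))" by (simp only: of_nat_le_iff)
    then have "1 \<le> real (2*(s+1)*(s+1))" by simp
    then have "1 \<le> real (2*(s+1)*(s+1)) ^ (s+1)" by (rule one_le_power)
    then show ?thesis unfolding \<kappa>_def by (rule inv_le1)
  qed
  let ?\<alpha> = "\<kappa>*(\<kappa>/2)"
  have "\<kappa> * (\<kappa>/2) \<le> 1 * 1" using k0 k1 by (intro mult_mono) auto
  then have a0: "0 < ?\<alpha>" "?\<alpha> \<le> 1" using k0 by auto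
  note MAIN = main[OF assms(1) s1 order_refl \<kappa>_def]
  show ?thesis
  proof (intro exI conjI allI impI)
    show "0 < ?\<alpha>" by (rule a0(1))
    show "0 < exp ?\<alpha>" by simp
  next
    fix f K \<epsilon> M Kb r
    assume H: "(\<forall>n. cmod (f n) = 1) \<and> q_multiplicative q f \<and>
       K 0 = 0 \<and> (\<forall>i. \<epsilon> i > 0) \<and> (\<forall>i. K i + (8*s+2) \<le> K (Suc i)) \<and>
       (\<forall>i. gowers_norm s (q ^ (K (Suc i) - K i)) (shiftS q (K i) f) \<le> 1 - \<epsilon> i)"
      and R: "Kb \<ge> K M \<and> (\<forall>\<omega>\<in>Pow {1..s}. r \<omega> \<le> s)"
    have h: "hyp q s (8*s+2) f K \<epsilon>" using H unfolding hyp_def by blast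
    define d where "d = (\<lambda>\<omega>. int (r \<omega>))"
    have st: "stateD s d (\<lambda>_. 0)" using R unfolding stateD_def d_def by auto
    have X: "cmod (Xs s f d (\<lambda>_. 0) (q^Kb)) \<le> real (card (Rset s (\<lambda>_. 0) (q^Kb))) * ga ?\<alpha> \<epsilon> M"
      using MAIN[where M=M, rule_format, OF h, of Kb d "\<lambda>_. 0"] R st by blast
    have A: "A_avg q s f r Kb = Xs s f d (\<lambda>_. 0) (q^Kb) / of_nat (card (Rset s (\<lambda>_. 0) (q^Kb)))"
      unfolding A_avg_def Xs_def Pi_Rset
    proof (intro arg_cong2[where f = "(/)"] refl sum.cong prod.cong)
      fix n \<omega> assume n: "n \<in> Rset s (\<lambda>_. 0) (q ^ Kb)" and w: "\<omega> \<in> Pow {1..s}"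
      have "0 \<le> cube_form n \<omega>" using n w unfolding Rset_def by auto
      then show "conj_pow (card \<omega>) (f (nat (cube_form n \<omega>) + r \<omega>)) = conj_pow (card \<omega>) (f (nat (cube_form n \<omega> + d \<omega>)))"
        by (simp add: d_def nat_add_distrib)
    qed
    have ele: "\<forall>i. 0 \<le> \<epsilon> i \<and> \<epsilon> i \<le> 1" using eps_le1[OF h] H by (auto simp: less_imp_le)
    have gexp: "ga ?\<alpha> \<epsilon> M \<le> exp ?\<alpha> * exp (- ?\<alpha> * (\<Sum>i<M. \<epsilon> i))"
      by (rule ga_exp[OF ele]) (use a0 in auto)
    have "cmod (A_avg q s f r Kb) \<le> ga ?\<alpha> \<epsilon> M"
    proof (cases "card (Rset s (\<lambda>_. 0) (q^Kb)) = 0")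
      case True
      have "0 \<le> ?\<alpha> * \<epsilon> i \<and> ?\<alpha> * \<epsilon> i \<le> 1" for i
      proof
        have e0: "0 \<le> \<epsilon> i" and e1: "\<epsilon> i \<le> 1" using ele by auto
        show "0 \<le> ?\<alpha> * \<epsilon> i" using a0(1) by (intro mult_nonneg_nonneg[OF _ e0]) linarith
        show "?\<alpha> * \<epsilon> i \<le> 1" by (rule mult_le_one[OF a0(2) e0 e1])
      qed
      then have "0 \<le> ga ?\<alpha> \<epsilon> M" by (intro ga_nonneg) blast
      then show ?thesis unfolding A using True by simp
    next
      case False
      then show ?thesis unfolding A using X by (simp add: norm_divide field_simps)
    qed
    then show "cmod (A_avg q s f r Kb) \<le> exp ?\<alpha> * exp (- ?\<alpha> * (\<Sum>i<M. \<epsilon> i))"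
      using gexp by linarith
  qed
qed

end
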